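(* Let $B$ be a finite one-generator skew brace, $x\in B$ with $B=B(x)$, and $C:=\langle x\rangle$ (the sub-q-cycle set of $B$ generated by $x$). Then the subgroup of $(B,\circ)$ generated by $C$ is $B$.
   Context: A skew brace is a triple $(B,+,\circ)$ where $(B,+)$ and $(B,\circ)$ are groups and $a\circ(b+c)=a\circ b-a+a\circ c$; $a^-$ is the inverse in $(B,\circ)$, $\lambda_a(b):=-a+a\circ b$, $\delta_a(b):=a\circ b-a$. $B(x)$ is the smallest subset containing $x$ that is a subgroup of both $(B,+)$ and $(B,\circ)$. $B$ is a q-cycle set via $a\cdot b:=\lambda_{a^-}(b)$, $a:b:=\delta_{a^-}(b)$, where a q-cycle set is a non-empty set with operations $\cdot,:$ such that each $y\mapsto x\cdot y$ is bijective and $(x\cdot y)\cdot(x\cdot z)=(y:x)\cdot(y\cdot z)$, $(x:y):(x:z)=(y\cdot x):(y:z)$, $(x\cdot y):(x\cdot z)=(y:x)\cdot(y:z)$. A sub-q-cycle set is a subset that is a q-cycle set under the restricted operations, and $\langle x\rangle$ is the smallest one containing $x$. *)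

theory Defs
  imports "HOL-Algebra.Generated_Groups"
begin

text \<open>A skew brace is given by two group structures A = (B,+) and M = (B,\<circ>)
 on the same carrier, satisfying the brace compatibility law
 a \<circ> (b + c) = a \<circ> b - a + a \<circ> c.\<close>

definition skew_brace :: "('a, 'm1) monoid_scheme \<Rightarrow> ('a, 'm2) monoid_scheme \<Rightarrow> bool" where
  "skew_brace A M \<longleftrightarrow> group A \<and> group M \<and> carrier A = carrier M \<and>
     (\<forall>a\<in>carrier A. \<forall>b\<in>carrier A. \<forall>c\<in>carrier A.
        a \<otimes>\<^bsub>M\<^esub> (b \<otimes>\<^bsub>A\<^esub> c)
          = (a \<otimes>\<^bsub>M\<^esub> b) \<otimes>\<^bsub>A\<^esub> inv\<^bsub>A\<^esub> a \<otimes>\<^bsub>A\<^esub> (a \<otimes>\<^bsub>M\<^esub> c))"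

definition brace_lambda :: "('a, 'm1) monoid_scheme \<Rightarrow> ('a, 'm2) monoid_scheme \<Rightarrow> 'a \<Rightarrow> 'a \<Rightarrow> 'a" where
  "brace_lambda A M a b = inv\<^bsub>A\<^esub> a \<otimes>\<^bsub>A\<^esub> (a \<otimes>\<^bsub>M\<^esub> b)"

definition brace_delta :: "('a, 'm1) monoid_scheme \<Rightarrow> ('a, 'm2) monoid_scheme \<Rightarrow> 'a \<Rightarrow> 'a \<Rightarrow> 'a" where
  "brace_delta A M a b = (a \<otimes>\<^bsub>M\<^esub> b) \<otimes>\<^bsub>A\<^esub> inv\<^bsub>A\<^esub> a"

definition qdot :: "('a, 'm1) monoid_scheme \<Rightarrow> ('a, 'm2) monoid_scheme \<Rightarrow> 'a \<Rightarrow> 'a \<Rightarrow> 'a" where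
  "qdot A M a b = brace_lambda A M (inv\<^bsub>M\<^esub> a) b"

definition qcolon :: "('a, 'm1) monoid_scheme \<Rightarrow> ('a, 'm2) monoid_scheme \<Rightarrow> 'a \<Rightarrow> 'a \<Rightarrow> 'a" where
  "qcolon A M a b = brace_delta A M (inv\<^bsub>M\<^esub> a) b"

definition brace_gen :: "('a, 'm1) monoid_scheme \<Rightarrow> ('a, 'm2) monoid_scheme \<Rightarrow> 'a \<Rightarrow> 'a set" where
  "brace_gen A M x = \<Inter>{S. x \<in> S \<and> subgroup S A \<and> subgroup S M}"

definition sub_qcycle_set :: "('a, 'm1) monoid_scheme \<Rightarrow> ('a, 'm2) monoid_scheme \<Rightarrow> 'a set \<Rightarrow> bool" where
  "sub_qcycle_set A M S \<longleftrightarrow> S \<subseteq> carrier A \<and> S \<noteq> {} \<and>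
     (\<forall>a\<in>S. \<forall>b\<in>S. qdot A M a b \<in> S \<and> qcolon A M a b \<in> S) \<and>
     (\<forall>a\<in>S. bij_betw (qdot A M a) S S) \<and>
     (\<forall>x\<in>S. \<forall>y\<in>S. \<forall>z\<in>S.
        qdot A M (qdot A M x y) (qdot A M x z) = qdot A M (qcolon A M y x) (qdot A M y z) \<and>
        qcolon A M (qcolon A M x y) (qcolon A M x z) = qcolon A M (qdot A M y x) (qcolon A M y z) \<and>
        qcolon A M (qdot A M x y) (qdot A M x z) = qdot A M (qcolon A M y x) (qcolon A M y z))"

definition qcs_gen :: "('a, 'm1) monoid_scheme \<Rightarrow> ('a, 'm2) monoid_scheme \<Rightarrow> 'a \<Rightarrow> 'a set" where
  "qcs_gen A M x = \<Inter>{S. x \<in> S \<and> sub_qcycle_set A M S}"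

end

theory Submission
  imports Defs
begin

locale sb =
  fixes A :: "('a, 'm1) monoid_scheme" and M :: "('a, 'm2) monoid_scheme"
  assumes sb: "skew_brace A M"
begin

lemma A: "group A" and M: "group M" and car: "carrier A = carrier M"
  and brace: "\<And>a b c. a \<in> carrier A \<Longrightarrow> b \<in> carrier A \<Longrightarrow> c \<in> carrier A \<Longrightarrow>
        a \<otimes>\<^bsub>M\<^esub> (b \<otimes>\<^bsub>A\<^esub> c)
          = (a \<otimes>\<^bsub>M\<^esub> b) \<otimes>\<^bsub>A\<^esub> inv\<^bsub>A\<^esub> a \<otimes>\<^bsub>A\<^esub> (a \<otimes>\<^bsub>M\<^esub> c)"
  using sb unfolding skew_brace_def by auto

sublocale A: group A by (rule A)
sublocale M: group M by (rule M)

lemma Mcar[simp]: "carrier M = carrier A" using car by simp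

lemma Mc[simp]: "a \<in> carrier A \<Longrightarrow> b \<in> carrier A \<Longrightarrow> a \<otimes>\<^bsub>M\<^esub> b \<in> carrier A"
  using M.m_closed by simp
lemma Mi[simp]: "a \<in> carrier A \<Longrightarrow> inv\<^bsub>M\<^esub> a \<in> carrier A"
  using M.inv_closed by simp
lemma M1[simp]: "\<one>\<^bsub>M\<^esub> \<in> carrier A"
  using M.one_closed by simp

lemma Acanc1: "a \<in> carrier A \<Longrightarrow> b \<in> carrier A \<Longrightarrow> a \<otimes>\<^bsub>A\<^esub> (inv\<^bsub>A\<^esub> a \<otimes>\<^bsub>A\<^esub> b) = b"
  by (simp add: A.m_assoc[symmetric])
lemma Acanc2: "a \<in> carrier A \<Longrightarrow> b \<in> carrier A \<Longrightarrow> inv\<^bsub>A\<^esub> a \<otimes>\<^bsub>A\<^esub> (a \<otimes>\<^bsub>A\<^esub> b) = b"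
  by (simp add: A.m_assoc[symmetric])
lemma Mcanc1: "a \<in> carrier M \<Longrightarrow> b \<in> carrier M \<Longrightarrow> a \<otimes>\<^bsub>M\<^esub> (inv\<^bsub>M\<^esub> a \<otimes>\<^bsub>M\<^esub> b) = b"
  by (simp add: M.m_assoc[symmetric])
lemma Mcanc2: "a \<in> carrier M \<Longrightarrow> b \<in> carrier M \<Longrightarrow> inv\<^bsub>M\<^esub> a \<otimes>\<^bsub>M\<^esub> (a \<otimes>\<^bsub>M\<^esub> b) = b"
  by (simp add: M.m_assoc[symmetric])

lemmas Asimps = A.m_assoc Acanc1 Acanc2 A.inv_mult_group
lemmas Msimps = M.m_assoc Mcanc1 Mcanc2 M.inv_mult_group

lemma brace': "a \<in> carrier A \<Longrightarrow> b \<in> carrier A \<Longrightarrow> c \<in> carrier A \<Longrightarrow>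
        a \<otimes>\<^bsub>M\<^esub> (b \<otimes>\<^bsub>A\<^esub> c)
          = (a \<otimes>\<^bsub>M\<^esub> b) \<otimes>\<^bsub>A\<^esub> (inv\<^bsub>A\<^esub> a \<otimes>\<^bsub>A\<^esub> (a \<otimes>\<^bsub>M\<^esub> c))"
  using brace[of a b c] by (simp add: A.m_assoc)

lemma one_eq: "\<one>\<^bsub>A\<^esub> = \<one>\<^bsub>M\<^esub>"
proof -
  have o: "\<one>\<^bsub>M\<^esub> \<in> carrier A" using M.one_closed by simp
  have "\<one>\<^bsub>M\<^esub> \<otimes>\<^bsub>M\<^esub> (\<one>\<^bsub>A\<^esub> \<otimes>\<^bsub>A\<^esub> \<one>\<^bsub>A\<^esub>) = (\<one>\<^bsub>M\<^esub> \<otimes>\<^bsub>M\<^esub> \<one>\<^bsub>A\<^esub>) \<otimes>\<^bsub>A\<^esub> (inv\<^bsub>A\<^esub> \<one>\<^bsub>M\<^esub> \<otimes>\<^bsub>A\<^esub> (\<one>\<^bsub>M\<^esub> \<otimes>\<^bsub>M\<^esub> \<one>\<^bsub>A\<^esub>))"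
    using brace'[OF o A.one_closed A.one_closed] .
  then have "\<one>\<^bsub>A\<^esub> = \<one>\<^bsub>A\<^esub> \<otimes>\<^bsub>A\<^esub> (inv\<^bsub>A\<^esub> \<one>\<^bsub>M\<^esub> \<otimes>\<^bsub>A\<^esub> \<one>\<^bsub>A\<^esub>)"
    using o by simp
  then have "\<one>\<^bsub>A\<^esub> = inv\<^bsub>A\<^esub> \<one>\<^bsub>M\<^esub>" using o by simp
  then show ?thesis by (metis A.inv_inv A.inv_one o)
qed

abbreviation "lam \<equiv> brace_lambda A M"
abbreviation "del \<equiv> brace_delta A M"

lemma lam_closed[simp]: "a \<in> carrier A \<Longrightarrow> b \<in> carrier A \<Longrightarrow> lam a b \<in> carrier A"
  unfolding brace_lambda_def by simp
lemma del_closed[simp]: "a \<in> carrier A \<Longrightarrow> b \<in> carrier A \<Longrightarrow> del a b \<in> carrier A"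
  unfolding brace_delta_def by simp

lemma mult_lam: "a \<in> carrier A \<Longrightarrow> b \<in> carrier A \<Longrightarrow> a \<otimes>\<^bsub>M\<^esub> b = a \<otimes>\<^bsub>A\<^esub> lam a b"
  unfolding brace_lambda_def by (simp add: Acanc1)

lemma lam_add: "a \<in> carrier A \<Longrightarrow> b \<in> carrier A \<Longrightarrow> c \<in> carrier A \<Longrightarrow>
   lam a (b \<otimes>\<^bsub>A\<^esub> c) = lam a b \<otimes>\<^bsub>A\<^esub> lam a c"
  unfolding brace_lambda_def by (simp add: brace' A.m_assoc)

lemma lam_mult: "a \<in> carrier A \<Longrightarrow> b \<in> carrier A \<Longrightarrow> c \<in> carrier A \<Longrightarrow>
   lam (a \<otimes>\<^bsub>M\<^esub> b) c = lam a (lam b c)"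
proof -
  assume a: "a \<in> carrier A" and b: "b \<in> carrier A" and c: "c \<in> carrier A"
  have "a \<otimes>\<^bsub>M\<^esub> b \<otimes>\<^bsub>M\<^esub> c = a \<otimes>\<^bsub>M\<^esub> (b \<otimes>\<^bsub>A\<^esub> lam b c)"
    using a b c by (simp add: M.m_assoc mult_lam[of b c])
  also have "\<dots> = (a \<otimes>\<^bsub>M\<^esub> b) \<otimes>\<^bsub>A\<^esub> (inv\<^bsub>A\<^esub> a \<otimes>\<^bsub>A\<^esub> (a \<otimes>\<^bsub>M\<^esub> lam b c))"
    using a b c by (simp add: brace')
  finally show ?thesis using a b c unfolding brace_lambda_def by (simp add: Acanc2)
qed

lemma lam_one: "b \<in> carrier A \<Longrightarrow> lam \<one>\<^bsub>M\<^esub> b = b"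
  unfolding brace_lambda_def by (simp add: one_eq[symmetric])

lemma lam_oneA: "a \<in> carrier A \<Longrightarrow> lam a \<one>\<^bsub>A\<^esub> = \<one>\<^bsub>A\<^esub>"
  unfolding brace_lambda_def by (simp add: one_eq)

lemma lam_inv: "a \<in> carrier A \<Longrightarrow> b \<in> carrier A \<Longrightarrow> lam a (inv\<^bsub>A\<^esub> b) = inv\<^bsub>A\<^esub> (lam a b)"
proof -
  assume a: "a \<in> carrier A" and b: "b \<in> carrier A"
  have "lam a (inv\<^bsub>A\<^esub> b) \<otimes>\<^bsub>A\<^esub> lam a b = \<one>\<^bsub>A\<^esub>"
    using a b by (simp add: lam_add[symmetric] lam_oneA)
  then show ?thesis using a b by (simp add: A.inv_equality)
qed

lemma lam_cancel1: "a \<in> carrier A \<Longrightarrow> b \<in> carrier A \<Longrightarrow> lam (inv\<^bsub>M\<^esub> a) (lam a b) = b"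
  by (simp add: lam_mult[symmetric] lam_one)
lemma lam_cancel2: "a \<in> carrier A \<Longrightarrow> b \<in> carrier A \<Longrightarrow> lam a (lam (inv\<^bsub>M\<^esub> a) b) = b"
  by (simp add: lam_mult[symmetric] lam_one)

lemma mult_invA: "a \<in> carrier A \<Longrightarrow> c \<in> carrier A \<Longrightarrow>
  a \<otimes>\<^bsub>M\<^esub> inv\<^bsub>A\<^esub> c = a \<otimes>\<^bsub>A\<^esub> inv\<^bsub>A\<^esub> (a \<otimes>\<^bsub>M\<^esub> c) \<otimes>\<^bsub>A\<^esub> a"
  by (simp add: mult_lam lam_inv Asimps)

lemma del_mult: "a \<in> carrier A \<Longrightarrow> b \<in> carrier A \<Longrightarrow> c \<in> carrier A \<Longrightarrow>
   del (a \<otimes>\<^bsub>M\<^esub> b) c = del a (del b c)"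
  unfolding brace_delta_def by (simp add: brace' mult_invA Asimps M.m_assoc)


abbreviation "qd \<equiv> qdot A M"
abbreviation "qc \<equiv> qcolon A M"

lemma qd_closed[simp]: "a \<in> carrier A \<Longrightarrow> b \<in> carrier A \<Longrightarrow> qd a b \<in> carrier A"
  unfolding qdot_def by simp
lemma qc_closed[simp]: "a \<in> carrier A \<Longrightarrow> b \<in> carrier A \<Longrightarrow> qc a b \<in> carrier A"
  unfolding qcolon_def by simp

lemma key1: "x \<in> carrier A \<Longrightarrow> y \<in> carrier A \<Longrightarrow> x \<otimes>\<^bsub>M\<^esub> qd x y = x \<otimes>\<^bsub>A\<^esub> y"
  unfolding qdot_def by (simp add: mult_lam lam_cancel2)

lemma key2: "x \<in> carrier A \<Longrightarrow> y \<in> carrier A \<Longrightarrow> y \<otimes>\<^bsub>M\<^esub> qc y x = x \<otimes>\<^bsub>A\<^esub> y"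
  unfolding qcolon_def brace_delta_def
  by (simp add: brace' mult_invA Asimps Mcanc1 one_eq[symmetric])

lemma id1a: "x \<in> carrier A \<Longrightarrow> y \<in> carrier A \<Longrightarrow> z \<in> carrier A \<Longrightarrow>
  qd (qd x y) (qd x z) = lam (inv\<^bsub>M\<^esub> (x \<otimes>\<^bsub>A\<^esub> y)) z"
proof -
  assume x: "x \<in> carrier A" and y: "y \<in> carrier A" and z: "z \<in> carrier A"
  have "qd (qd x y) (qd x z) = lam (inv\<^bsub>M\<^esub> (qd x y) \<otimes>\<^bsub>M\<^esub> inv\<^bsub>M\<^esub> x) z"
    unfolding qdot_def[of A M "qd x y"] using x y z by (simp add: lam_mult qdot_def)
  also have "\<dots> = lam (inv\<^bsub>M\<^esub> (x \<otimes>\<^bsub>M\<^esub> qd x y)) z"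
    using x y by (simp add: M.inv_mult_group)
  finally show ?thesis using x y by (simp add: key1)
qed

lemma id1b: "x \<in> carrier A \<Longrightarrow> y \<in> carrier A \<Longrightarrow> z \<in> carrier A \<Longrightarrow>
  qd (qc y x) (qd y z) = lam (inv\<^bsub>M\<^esub> (x \<otimes>\<^bsub>A\<^esub> y)) z"
proof -
  assume x: "x \<in> carrier A" and y: "y \<in> carrier A" and z: "z \<in> carrier A"
  have "qd (qc y x) (qd y z) = lam (inv\<^bsub>M\<^esub> (qc y x) \<otimes>\<^bsub>M\<^esub> inv\<^bsub>M\<^esub> y) z"
    unfolding qdot_def[of A M "qc y x"] using x y z by (simp add: lam_mult qdot_def)
  also have "\<dots> = lam (inv\<^bsub>M\<^esub> (y \<otimes>\<^bsub>M\<^esub> qc y x)) z"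
    using x y by (simp add: M.inv_mult_group)
  finally show ?thesis using x y by (simp add: key2)
qed

lemma id2a: "x \<in> carrier A \<Longrightarrow> y \<in> carrier A \<Longrightarrow> z \<in> carrier A \<Longrightarrow>
  qc (qc x y) (qc x z) = del (inv\<^bsub>M\<^esub> (y \<otimes>\<^bsub>A\<^esub> x)) z"
proof -
  assume x: "x \<in> carrier A" and y: "y \<in> carrier A" and z: "z \<in> carrier A"
  have "qc (qc x y) (qc x z) = del (inv\<^bsub>M\<^esub> (qc x y) \<otimes>\<^bsub>M\<^esub> inv\<^bsub>M\<^esub> x) z"
    unfolding qcolon_def[of A M "qc x y"] using x y z by (simp add: del_mult qcolon_def)
  also have "\<dots> = del (inv\<^bsub>M\<^esub> (x \<otimes>\<^bsub>M\<^esub> qc x y)) z"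
    using x y by (simp add: M.inv_mult_group)
  finally show ?thesis using x y by (simp add: key2)
qed

lemma id2b: "x \<in> carrier A \<Longrightarrow> y \<in> carrier A \<Longrightarrow> z \<in> carrier A \<Longrightarrow>
  qc (qd y x) (qc y z) = del (inv\<^bsub>M\<^esub> (y \<otimes>\<^bsub>A\<^esub> x)) z"
proof -
  assume x: "x \<in> carrier A" and y: "y \<in> carrier A" and z: "z \<in> carrier A"
  have "qc (qd y x) (qc y z) = del (inv\<^bsub>M\<^esub> (qd y x) \<otimes>\<^bsub>M\<^esub> inv\<^bsub>M\<^esub> y) z"
    unfolding qcolon_def[of A M "qd y x"] using x y z by (simp add: del_mult qcolon_def)
  also have "\<dots> = del (inv\<^bsub>M\<^esub> (y \<otimes>\<^bsub>M\<^esub> qd y x)) z"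
    using x y by (simp add: M.inv_mult_group)
  finally show ?thesis using x y by (simp add: key1)
qed

lemma del_lam: "a \<in> carrier A \<Longrightarrow> t \<in> carrier A \<Longrightarrow>
  del a t = a \<otimes>\<^bsub>A\<^esub> lam a t \<otimes>\<^bsub>A\<^esub> inv\<^bsub>A\<^esub> a"
  unfolding brace_delta_def by (simp add: mult_lam)

lemma id3: "x \<in> carrier A \<Longrightarrow> y \<in> carrier A \<Longrightarrow> z \<in> carrier A \<Longrightarrow>
  qc (qd x y) (qd x z) = qd (qc y x) (qc y z)"
proof -
  assume x: "x \<in> carrier A" and y: "y \<in> carrier A" and z: "z \<in> carrier A"
  define u where "u = qd x y"
  define v where "v = qc y x"
  define w where "w = inv\<^bsub>M\<^esub> (x \<otimes>\<^bsub>A\<^esub> y)"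
  have u: "u \<in> carrier A" and v: "v \<in> carrier A" and w: "w \<in> carrier A"
    using x y by (auto simp: u_def v_def w_def)
  have wu: "w = inv\<^bsub>M\<^esub> u \<otimes>\<^bsub>M\<^esub> inv\<^bsub>M\<^esub> x"
    unfolding w_def u_def using x y by (simp add: key1[symmetric] M.inv_mult_group)
  have wv: "w = inv\<^bsub>M\<^esub> v \<otimes>\<^bsub>M\<^esub> inv\<^bsub>M\<^esub> y"
    unfolding w_def v_def using x y by (simp add: key2[symmetric] M.inv_mult_group)
  have vw: "inv\<^bsub>M\<^esub> v = w \<otimes>\<^bsub>M\<^esub> y"
    using wv v y by (simp add: M.m_assoc)
  have lyy: "lam y (inv\<^bsub>M\<^esub> y) = inv\<^bsub>A\<^esub> y"
    unfolding brace_lambda_def using y by (simp add: one_eq[symmetric])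
  have lu: "lam (inv\<^bsub>M\<^esub> u) u = inv\<^bsub>A\<^esub> (inv\<^bsub>M\<^esub> u)"
    unfolding brace_lambda_def using u by (simp add: one_eq[symmetric])
  have lwy: "lam w y = inv\<^bsub>A\<^esub> (inv\<^bsub>M\<^esub> u)"
    using wu x u y lu by (simp add: lam_mult u_def qdot_def)
  have key: "lam (inv\<^bsub>M\<^esub> v) (inv\<^bsub>M\<^esub> y) = inv\<^bsub>M\<^esub> u"
    using vw w y u by (simp add: lam_mult lyy lam_inv lwy)
  have L: "qc u (qd x z) = inv\<^bsub>M\<^esub> u \<otimes>\<^bsub>A\<^esub> lam w z \<otimes>\<^bsub>A\<^esub> inv\<^bsub>A\<^esub> (inv\<^bsub>M\<^esub> u)"
    unfolding qcolon_def qdot_def using u x z by (simp add: del_lam wu lam_mult)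
  have R: "qd v (qc y z) = lam (inv\<^bsub>M\<^esub> v) (inv\<^bsub>M\<^esub> y) \<otimes>\<^bsub>A\<^esub> lam w z \<otimes>\<^bsub>A\<^esub>
      inv\<^bsub>A\<^esub> (lam (inv\<^bsub>M\<^esub> v) (inv\<^bsub>M\<^esub> y))"
    unfolding qcolon_def qdot_def using v y z by (simp add: del_lam wv lam_mult lam_add lam_inv)
  show ?thesis using L R key u_def v_def by simp
qed

lemma carrier_qcs: "sub_qcycle_set A M (carrier A)"
  unfolding sub_qcycle_set_def
proof (intro conjI ballI)
  show "carrier A \<noteq> {}" by auto
next
  fix a assume a: "a \<in> carrier A"
  show "bij_betw (qd a) (carrier A) (carrier A)"
    by (rule bij_betw_byWitness[where f'="lam a"]) (use a in \<open>auto simp: qdot_def lam_cancel1 lam_cancel2\<close>)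
qed (auto simp: id1a id1b id2a id2b id3)


lemma gen_sub: "x \<in> carrier A \<Longrightarrow> qcs_gen A M x \<subseteq> carrier A"
  unfolding qcs_gen_def by (rule Inter_lower) (simp add: carrier_qcs)

lemma gen_x: "x \<in> qcs_gen A M x"
  unfolding qcs_gen_def by blast

lemma sqs_closed: "sub_qcycle_set A M S \<Longrightarrow> a \<in> S \<Longrightarrow> b \<in> S \<Longrightarrow> qd a b \<in> S"
  by (simp add: sub_qcycle_set_def)

lemma gen_qd: "c \<in> qcs_gen A M x \<Longrightarrow> d \<in> qcs_gen A M x \<Longrightarrow> qd c d \<in> qcs_gen A M x"
  unfolding qcs_gen_def
proof (rule InterI)
  fix S assume c: "c \<in> \<Inter>{S. x \<in> S \<and> sub_qcycle_set A M S}"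
    and d: "d \<in> \<Inter>{S. x \<in> S \<and> sub_qcycle_set A M S}"
    and S: "S \<in> {S. x \<in> S \<and> sub_qcycle_set A M S}"
  have "c \<in> S" "d \<in> S" using InterD[OF c S] InterD[OF d S] by auto
  then show "qd c d \<in> S" using S sqs_closed by auto
qed

lemma finite_surj_lemma:
  assumes "finite S" "S \<subseteq> carrier A" "inj_on f S" "f ` S \<subseteq> S" "y \<in> S"
  shows "\<exists>z\<in>S. y = f z"
proof -
  have "f ` S = S" using assms by (simp add: endo_inj_surj)
  then show ?thesis using assms(5) by force
qed

context
  fixes x assumes fin: "finite (carrier A)" and xc: "x \<in> carrier A"
begin

definition "CC = qcs_gen A M x"
definition "GG = generate M CC"

lemma CCsub: "CC \<subseteq> carrier A" using gen_sub[OF xc] CC_def by simp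
lemma CCfin: "finite CC" using CCsub fin finite_subset by blast

lemma lamC: "c \<in> CC \<Longrightarrow> d \<in> CC \<Longrightarrow> lam c d \<in> CC"
proof -
  assume c: "c \<in> CC" and d: "d \<in> CC"
  have cc: "c \<in> carrier A" using c CCsub by auto
  have "inj_on (qd c) CC"
    by (rule inj_on_inverseI[where g="lam c"]) (use cc CCsub in \<open>auto simp: qdot_def lam_cancel2\<close>)
  moreover have "qd c ` CC \<subseteq> CC" using gen_qd c CC_def by auto
  ultimately obtain e where e: "e \<in> CC" "d = qd c e"
    using finite_surj_lemma[OF CCfin CCsub _ _ d] by blast
  have "lam c d = e" using e cc CCsub by (auto simp: qdot_def lam_cancel2)
  then show ?thesis using e by simp
qed

lemma GGsub: "subgroup GG M"
  unfolding GG_def by (rule M.generate_is_subgroup) (use CCsub in simp)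

lemma GGcar: "GG \<subseteq> carrier A"
  using subgroup.subset[OF GGsub] by simp

lemma lamG: "g \<in> GG \<Longrightarrow> d \<in> CC \<Longrightarrow> lam g d \<in> CC"
  unfolding GG_def
proof (induction arbitrary: d rule: generate.induct)
  case one
  then show ?case using CCsub by (auto simp: lam_one)
next
  case (incl h)
  then show ?case by (rule lamC)
next
  case (inv h)
  then show ?case using gen_qd CCsub by (auto simp: CC_def qdot_def)
next
  case (eng h1 h2)
  have "h1 \<in> carrier A" "h2 \<in> carrier A"
    using eng.hyps GGcar GG_def by auto
  then show ?case using eng CCsub by (auto simp: lam_mult)
qed

definition "HH = {h \<in> carrier A. \<forall>g\<in>GG. g \<otimes>\<^bsub>A\<^esub> h \<in> GG}"

lemma CH: "CC \<subseteq> HH"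
proof
  fix c assume c: "c \<in> CC"
  have cc: "c \<in> carrier A" using c CCsub by auto
  have "g \<otimes>\<^bsub>A\<^esub> c \<in> GG" if g: "g \<in> GG" for g
  proof -
    have gc: "g \<in> carrier A" using g GGcar by auto
    have ig: "inv\<^bsub>M\<^esub> g \<in> GG" using g subgroup.m_inv_closed[OF GGsub] by auto
    have "g \<otimes>\<^bsub>A\<^esub> c = g \<otimes>\<^bsub>M\<^esub> lam (inv\<^bsub>M\<^esub> g) c"
      using gc cc by (simp add: mult_lam lam_cancel2)
    moreover have "lam (inv\<^bsub>M\<^esub> g) c \<in> GG"
      unfolding GG_def by (rule generate.incl[OF lamG[OF ig c]])
    ultimately show ?thesis using g subgroup.m_closed[OF GGsub] by auto
  qed
  then show "c \<in> HH" using cc HH_def by auto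
qed

lemma HH_mult: "a \<in> HH \<Longrightarrow> b \<in> HH \<Longrightarrow> a \<otimes>\<^bsub>A\<^esub> b \<in> HH"
proof -
  assume a: "a \<in> HH" and b: "b \<in> HH"
  have ac: "a \<in> carrier A" and bc: "b \<in> carrier A" using a b HH_def by auto
  have "g \<otimes>\<^bsub>A\<^esub> (a \<otimes>\<^bsub>A\<^esub> b) \<in> GG" if g: "g \<in> GG" for g
  proof -
    have gc: "g \<in> carrier A" using g GGcar by auto
    have "g \<otimes>\<^bsub>A\<^esub> a \<in> GG" using a g HH_def by auto
    then have "(g \<otimes>\<^bsub>A\<^esub> a) \<otimes>\<^bsub>A\<^esub> b \<in> GG" using b HH_def by auto
    then show ?thesis using gc ac bc by (simp add: A.m_assoc)
  qed
  then show ?thesis using ac bc HH_def by auto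
qed

lemma HH_one: "\<one>\<^bsub>A\<^esub> \<in> HH"
  unfolding HH_def using GGcar by auto

lemma HH_inv: "h \<in> HH \<Longrightarrow> inv\<^bsub>A\<^esub> h \<in> HH"
proof -
  assume h: "h \<in> HH"
  have hc: "h \<in> carrier A" using h HH_def by auto
  have "g \<otimes>\<^bsub>A\<^esub> inv\<^bsub>A\<^esub> h \<in> GG" if g: "g \<in> GG" for g
  proof -
    have fG: "finite GG" using GGcar fin finite_subset by blast
    have "inj_on (\<lambda>k. k \<otimes>\<^bsub>A\<^esub> h) GG"
      unfolding inj_on_def using GGcar hc by (meson A.right_cancel subsetD)
    moreover have "(\<lambda>k. k \<otimes>\<^bsub>A\<^esub> h) ` GG \<subseteq> GG" using h HH_def by auto
    ultimately obtain k where k: "k \<in> GG" "g = k \<otimes>\<^bsub>A\<^esub> h"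
      using finite_surj_lemma[OF fG GGcar _ _ g] by blast
    then have "g \<otimes>\<^bsub>A\<^esub> inv\<^bsub>A\<^esub> h = k" using GGcar hc by (auto simp: A.m_assoc)
    then show ?thesis using k by simp
  qed
  then show ?thesis using hc HH_def by auto
qed

lemma lamH: "h \<in> GG \<Longrightarrow> k \<in> GG \<Longrightarrow> lam k h \<in> HH"
  unfolding GG_def
proof (induction arbitrary: k rule: generate.induct)
  case one
  then show ?case using GGcar HH_one GG_def by (auto simp: lam_oneA one_eq[symmetric])
next
  case (incl h)
  then show ?case using lamG CH GG_def by auto
next
  case (inv c)
  have cc: "c \<in> carrier A" using inv CCsub by auto
  have kc: "k \<in> carrier A" using inv GGcar GG_def by auto
  have kG: "k \<otimes>\<^bsub>M\<^esub> inv\<^bsub>M\<^esub> c \<in> GG"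
    using inv GGsub GG_def generate.inv subgroup.m_closed by metis
  have lcc: "lam c (inv\<^bsub>M\<^esub> c) = inv\<^bsub>A\<^esub> c"
    unfolding brace_lambda_def using cc by (simp add: one_eq[symmetric])
  have "lam k (inv\<^bsub>M\<^esub> c) = lam (k \<otimes>\<^bsub>M\<^esub> inv\<^bsub>M\<^esub> c) (lam c (inv\<^bsub>M\<^esub> c))"
    using cc kc by (simp add: lam_mult lam_cancel1)
  also have "\<dots> = inv\<^bsub>A\<^esub> (lam (k \<otimes>\<^bsub>M\<^esub> inv\<^bsub>M\<^esub> c) c)"
    using cc kc by (simp add: lcc lam_inv)
  finally show ?case using HH_inv lamG[OF kG inv.hyps] CH by auto
next
  case (eng h1 h2)
  have h1: "h1 \<in> carrier A" "h2 \<in> carrier A" and kc: "k \<in> carrier A"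
    using eng GGcar GG_def by auto
  have k1: "k \<otimes>\<^bsub>M\<^esub> h1 \<in> GG" using eng GGsub GG_def subgroup.m_closed by metis
  have "lam k (h1 \<otimes>\<^bsub>M\<^esub> h2) = lam k h1 \<otimes>\<^bsub>A\<^esub> lam (k \<otimes>\<^bsub>M\<^esub> h1) h2"
    using h1 kc by (simp add: mult_lam[of h1 h2] lam_add lam_mult)
  then show ?case using eng k1[unfolded GG_def] HH_mult by auto
qed

lemma GH: "GG \<subseteq> HH"
proof
  fix g assume g: "g \<in> GG"
  have "\<one>\<^bsub>M\<^esub> \<in> GG" using subgroup.one_closed[OF GGsub] .
  then show "g \<in> HH" using lamH[OF g] g GGcar by (force simp: lam_one)
qed

lemma GG_A: "subgroup GG A"
proof (rule subgroup.intro)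
  show "GG \<subseteq> carrier A" by (rule GGcar)
  show "\<one>\<^bsub>A\<^esub> \<in> GG" using subgroup.one_closed[OF GGsub] by (simp add: one_eq)
  fix a b assume a: "a \<in> GG" and b: "b \<in> GG"
  then show "a \<otimes>\<^bsub>A\<^esub> b \<in> GG" using GH HH_def by auto
next
  fix a assume a: "a \<in> GG"
  have "inv\<^bsub>A\<^esub> a \<in> HH" using HH_inv GH a by auto
  then have "\<one>\<^bsub>A\<^esub> \<otimes>\<^bsub>A\<^esub> inv\<^bsub>A\<^esub> a \<in> GG"
    using subgroup.one_closed[OF GGsub] HH_def by (auto simp: one_eq)
  then show "inv\<^bsub>A\<^esub> a \<in> GG" using a GGcar by auto
qed

lemma main: "carrier A = brace_gen A M x \<Longrightarrow> GG = carrier M"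
proof -
  assume eq: "carrier A = brace_gen A M x"
  have "x \<in> GG" unfolding GG_def CC_def by (rule generate.incl[OF gen_x])
  then have "brace_gen A M x \<subseteq> GG" unfolding brace_gen_def using GG_A GGsub by blast
  then show ?thesis using eq GGcar by auto
qed

end

end

theorem mainTheorem20:
  fixes A :: "('a, 'm1) monoid_scheme" and M :: "('a, 'm2) monoid_scheme" and x :: 'a
  assumes "skew_brace A M"
    and "finite (carrier A)"
    and "x \<in> carrier A"
    and "carrier A = brace_gen A M x"
  shows "generate M (qcs_gen A M x) = carrier M"
proof -
  interpret sb A M by (rule sb.intro) (rule assms(1))
  show ?thesis using main[OF assms(2,3,4)] GG_def[OF assms(2,3)] CC_def[OF assms(2,3)] by simp
qed

end
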